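(* There is an absolute constant $C>0$ such that the following holds. Let $\varepsilon\in(0,1)$ and let $f:\mathbb R\to\mathbb R$ be $1$-smooth with $f\ge0$, $f(0)=1$ and $f'(0)\le-\varepsilon$. Then ZerothOrder terminates and outputs an $\varepsilon$-stationary point of $f$ using at most $C(1+\log(1/\varepsilon))$ queries to the zeroth- and first-order oracle.
   Context: $f:\mathbb R\to\mathbb R$ is $1$-smooth if it is continuously differentiable and $f'$ is $1$-Lipschitz; $x$ is an $\varepsilon$-stationary point if $|f'(x)|<\varepsilon$. The oracle returns $(f(x),f'(x))$ on query $x$; values at already-queried points are reused. Subroutines (each "returns" its output to the caller, and a recursive call's output is returned unchanged): BinarySearch$(x_0,x_1)$: $m=(x_0+x_1)/2$; if $|f'(m)|<\varepsilon$ return $m$; if $f'(m)\le-\varepsilon$ return BinarySearch$(m,x_1)$; if $f'(m)>0$ return BinarySearch$(x_0,m)$. BinarySearchIII$(x_-,x_+)$: $m=(x_-+x_+)/2$; if $|f'(m)|<\varepsilon$ return $m$; else if $f'(m)>0$ return BinarySearch$(x_-,m)$; else if $f(m)\ge f(x_-)$ return BinarySearchIII$(x_-,m)$; else return BinarySearchIII$(m,x_+)$. BinarySearchII$(x_-,x_+)$: $m=(x_-+x_+)/2$; if $|f'(m)|<\varepsilon$ return $m$; else if $f'(m)>0$ return BinarySearch$(x_-,m)$; else if $f(m)\ge f(x_-)$ return BinarySearchIII$(x_-,m)$; else if $f(m)\le f(x_+)$ return BinarySearchIII$(m,x_+)$; else if $f(x_-)-f(m)\le\frac12(f(x_-)-f(x_+))$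 return BinarySearchII$(x_-,m)$; else return BinarySearchII$(m,x_+)$. DecreaseGap$(x_0)$: let $y=x_0+2/\varepsilon$; if $|f'(y)|<\varepsilon$ return ("stationary", $y$); else if $f'(y)>0$ return ("stationary", BinarySearch$(x_0,y)$); else if $f(y)\ge\frac34 f(x_0)$ return ("base", $x_0$); else return DecreaseGap$(y)$. ZerothOrder: run DecreaseGap$(0)$. If it returns ("stationary", $z$), output $z$. If it returns ("base", $x_-$), set $x_+=x_-+2/\varepsilon$; if $|f'(x_-)|<\varepsilon$ output $x_-$; else if $f(x_+)\le f(x_-)$ output BinarySearchII$(x_-,x_+)$; else output BinarySearchIII$(x_-,x_+)$. *)

theory Defs
  imports Complex_Main
begin

(* Executions of the subroutines are modelled with an explicit fuel parameter n
   (recursion depth budget). Result None = fuel exhausted (no termination within budget);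
   Some (z, qs) = output z, where qs lists the points at which the oracle
   (f(x), f'(x)) was consulted during the run. Queries at already-queried points
   are reused, so the number of oracle queries is card (set qs). *)

definition add_q :: "real list \<Rightarrow> (real \<times> real list) option \<Rightarrow> (real \<times> real list) option" where
  "add_q ps r = map_option (\<lambda>(z, qs). (z, ps @ qs)) r"

fun BinarySearch :: "(real \<Rightarrow> real) \<Rightarrow> real \<Rightarrow> nat \<Rightarrow> real \<Rightarrow> real \<Rightarrow> (real \<times> real list) option" where
  "BinarySearch f' \<epsilon> 0 x0 x1 = None"
| "BinarySearch f' \<epsilon> (Suc n) x0 x1 =
     (let m = (x0 + x1) / 2 in
      if \<bar>f' m\<bar> < \<epsilon> then Some (m, [m])
      else if f' m \<le> - \<epsilon> then add_q [m] (BinarySearch f' \<epsilon> n m x1)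
      else if f' m > 0 then add_q [m] (BinarySearch f' \<epsilon> n x0 m)
      else None)"

fun BinarySearchIII :: "(real \<Rightarrow> real) \<Rightarrow> (real \<Rightarrow> real) \<Rightarrow> real \<Rightarrow> nat \<Rightarrow> real \<Rightarrow> real \<Rightarrow> (real \<times> real list) option" where
  "BinarySearchIII f f' \<epsilon> 0 xm xp = None"
| "BinarySearchIII f f' \<epsilon> (Suc n) xm xp =
     (let m = (xm + xp) / 2 in
      if \<bar>f' m\<bar> < \<epsilon> then Some (m, [m])
      else if f' m > 0 then add_q [m] (BinarySearch f' \<epsilon> n xm m)
      else if f m \<ge> f xm then add_q [m, xm] (BinarySearchIII f f' \<epsilon> n xm m)
      else add_q [m, xm] (BinarySearchIII f f' \<epsilon> n m xp))"

fun BinarySearchII :: "(real \<Rightarrow> real) \<Rightarrow> (real \<Rightarrow> real) \<Rightarrow> real \<Rightarrow> nat \<Rightarrow> real \<Rightarrow> real \<Rightarrow> (real \<times> real list) option" where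
  "BinarySearchII f f' \<epsilon> 0 xm xp = None"
| "BinarySearchII f f' \<epsilon> (Suc n) xm xp =
     (let m = (xm + xp) / 2 in
      if \<bar>f' m\<bar> < \<epsilon> then Some (m, [m])
      else if f' m > 0 then add_q [m] (BinarySearch f' \<epsilon> n xm m)
      else if f m \<ge> f xm then add_q [m, xm] (BinarySearchIII f f' \<epsilon> n xm m)
      else if f m \<le> f xp then add_q [m, xm, xp] (BinarySearchIII f f' \<epsilon> n m xp)
      else if f xm - f m \<le> (f xm - f xp) / 2 then add_q [m, xm, xp] (BinarySearchII f f' \<epsilon> n xm m)
      else add_q [m, xm, xp] (BinarySearchII f f' \<epsilon> n m xp))"

datatype dg_result = Stationary real | Base real

fun DecreaseGap :: "(real \<Rightarrow> real) \<Rightarrow> (real \<Rightarrow> real) \<Rightarrow> real \<Rightarrow> nat \<Rightarrow> real \<Rightarrow> (dg_result \<times> real list) option" where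
  "DecreaseGap f f' \<epsilon> 0 x0 = None"
| "DecreaseGap f f' \<epsilon> (Suc n) x0 =
     (let y = x0 + 2 / \<epsilon> in
      if \<bar>f' y\<bar> < \<epsilon> then Some (Stationary y, [y])
      else if f' y > 0 then
        map_option (\<lambda>(z, qs). (Stationary z, y # qs)) (BinarySearch f' \<epsilon> n x0 y)
      else if f y \<ge> 3 / 4 * f x0 then Some (Base x0, [y, x0])
      else map_option (\<lambda>(r, qs). (r, [y, x0] @ qs)) (DecreaseGap f f' \<epsilon> n y))"

fun ZerothOrder :: "(real \<Rightarrow> real) \<Rightarrow> (real \<Rightarrow> real) \<Rightarrow> real \<Rightarrow> nat \<Rightarrow> (real \<times> real list) option" where
  "ZerothOrder f f' \<epsilon> n =
     (case DecreaseGap f f' \<epsilon> n 0 of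
        None \<Rightarrow> None
      | Some (Stationary z, qs) \<Rightarrow> Some (z, qs)
      | Some (Base xm, qs) \<Rightarrow>
          (let xp = xm + 2 / \<epsilon> in
           if \<bar>f' xm\<bar> < \<epsilon> then Some (xm, qs @ [xm])
           else if f xp \<le> f xm then add_q (qs @ [xm, xp]) (BinarySearchII f f' \<epsilon> n xm xp)
           else add_q (qs @ [xm, xp]) (BinarySearchIII f f' \<epsilon> n xm xp)))"

end

theory Submission
  imports Defs
begin

locale zo =
  fixes f f' :: "real \<Rightarrow> real" and \<epsilon> :: real
  assumes eps: "0 < \<epsilon>" "\<epsilon> < 1"
    and der: "\<And>x. (f has_real_derivative f' x) (at x)"
    and lip: "\<And>x y. \<bar>f' x - f' y\<bar> \<le> \<bar>x - y\<bar>"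
    and nonneg: "\<And>x. f x \<ge> 0"
begin

lemma descent:
  assumes "x \<le> y"
  shows "f y \<le> f x + f' x * (y - x) + (y - x)^2 / 2"
proof -
  define h where "h t = f t - f' x * (t - x) - (t - x)^2 / 2" for t
  have "h y \<le> h x"
  proof (rule DERIV_nonpos_imp_nonincreasing[OF assms])
    fix t assume t: "x \<le> t" "t \<le> y"
    have "DERIV h t :> f' t - f' x * 1 - (2 * (t - x) * 1) / 2"
      unfolding h_def[abs_def]
      by (intro derivative_eq_intros) (auto intro: der)
    moreover have "f' t - f' x * 1 - (2 * (t - x) * 1) / 2 \<le> 0"
      using lip[of t x] t by (simp add: abs_if split: if_splits)
    ultimately show "\<exists>d. DERIV h t :> d \<and> d \<le> 0" by blast
  qed
  then show ?thesis unfolding h_def by simp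
qed

lemma f_lb:
  assumes "f' x \<le> - \<epsilon>"
  shows "f x \<ge> \<epsilon>^2 / 2"
proof -
  have "0 \<le> f (x - f' x)" by (rule nonneg)
  also have "\<dots> \<le> f x + f' x * (- f' x) + (- f' x)^2 / 2"
    using descent[of x "x - f' x"] assms eps by simp
  finally have "(f' x)^2 / 2 \<le> f x" by (simp add: power2_eq_square)
  moreover have "\<epsilon>^2 \<le> (f' x)^2"
    using assms eps by (subst abs_le_square_iff[symmetric]) auto
  ultimately show ?thesis by simp
qed

lemma BS:
  "x0 < x1 \<Longrightarrow> f' x0 \<le> - \<epsilon> \<Longrightarrow> f' x1 \<ge> \<epsilon> \<Longrightarrow> x1 - x0 < 2 * \<epsilon> * 2^k \<Longrightarrow> k < n \<Longrightarrow>
   \<exists>z qs. BinarySearch f' \<epsilon> n x0 x1 = Some (z, qs) \<and> \<bar>f' z\<bar> < \<epsilon> \<and> length qs \<le> k + 1"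
proof (induction k arbitrary: x0 x1 n)
  case 0
  have "f' x1 - f' x0 \<le> x1 - x0" using lip[of x1 x0] 0 by simp
  then show ?case using 0 by simp
next
  case (Suc k)
  then obtain n' where n: "n = Suc n'" and kn: "k < n'" by (cases n) auto
  define m where "m = (x0 + x1) / 2"
  have L: "m - x0 < 2 * \<epsilon> * 2^k" "x1 - m < 2 * \<epsilon> * 2^k" "x0 < m" "m < x1"
    using Suc.prems by (auto simp: m_def field_simps)
  consider "\<bar>f' m\<bar> < \<epsilon>" | "f' m \<le> - \<epsilon>" | "f' m \<ge> \<epsilon>" by linarith
  then show ?case
  proof cases
    case 1 then show ?thesis by (simp add: n m_def[symmetric] Let_def)
  next
    case 2
    from Suc.IH[OF L(4) 2 Suc.prems(3) L(2) kn] obtain z qs where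
      "BinarySearch f' \<epsilon> n' m x1 = Some (z, qs)" "\<bar>f' z\<bar> < \<epsilon>" "length qs \<le> k + 1" by blast
    then show ?thesis using 2 eps by (simp add: n m_def[symmetric] Let_def add_q_def)
  next
    case 3
    from Suc.IH[OF L(3) Suc.prems(2) 3 L(1) kn] obtain z qs where
      "BinarySearch f' \<epsilon> n' x0 m = Some (z, qs)" "\<bar>f' z\<bar> < \<epsilon>" "length qs \<le> k + 1" by blast
    then show ?thesis using 3 eps by (simp add: n m_def[symmetric] Let_def add_q_def)
  qed
qed

lemma III:
  "x0 < x1 \<Longrightarrow> f' x0 \<le> - \<epsilon> \<Longrightarrow> f x1 \<ge> f x0 \<Longrightarrow> x1 - x0 < 2 * \<epsilon> * 2^k \<Longrightarrow> k < n \<Longrightarrow>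
   \<exists>z qs. BinarySearchIII f f' \<epsilon> n x0 x1 = Some (z, qs) \<and> \<bar>f' z\<bar> < \<epsilon> \<and> length qs \<le> 2 * k + 2"
proof (induction k arbitrary: x0 x1 n)
  case 0
  define L where "L = x1 - x0"
  have "f x1 \<le> f x0 + f' x0 * L + L^2 / 2" using descent[of x0 x1] 0 by (simp add: L_def)
  moreover have "f' x0 * L \<le> - \<epsilon> * L" using 0 by (intro mult_right_mono) (auto simp: L_def)
  moreover have "L * (L/2 - \<epsilon>) < 0" using 0 by (intro mult_pos_neg) (auto simp: L_def)
  ultimately have "f x1 < f x0" by (simp add: power2_eq_square algebra_simps)
  then show ?case using 0 by simp
next
  case (Suc k)
  then obtain n' where n: "n = Suc n'" and kn: "k < n'" by (cases n) auto
  define m where "m = (x0 + x1) / 2"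
  have L: "m - x0 < 2 * \<epsilon> * 2^k" "x1 - m < 2 * \<epsilon> * 2^k" "x0 < m" "m < x1"
    using Suc.prems by (auto simp: m_def field_simps)
  consider "\<bar>f' m\<bar> < \<epsilon>" | "f' m \<ge> \<epsilon>" | "f' m \<le> - \<epsilon>" "f m \<ge> f x0" | "f' m \<le> - \<epsilon>" "f m < f x0" by linarith
  then show ?case
  proof cases
    case 1 then show ?thesis by (simp add: n m_def[symmetric] Let_def)
  next
    case 2
    from BS[OF L(3) Suc.prems(2) 2 L(1) kn] obtain z qs where
      "BinarySearch f' \<epsilon> n' x0 m = Some (z, qs)" "\<bar>f' z\<bar> < \<epsilon>" "length qs \<le> k + 1" by blast
    then show ?thesis using 2 eps by (simp add: n m_def[symmetric] Let_def add_q_def)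
  next
    case 3
    from Suc.IH[OF L(3) Suc.prems(2) 3(2) L(1) kn] obtain z qs where
      "BinarySearchIII f f' \<epsilon> n' x0 m = Some (z, qs)" "\<bar>f' z\<bar> < \<epsilon>" "length qs \<le> 2 * k + 2" by blast
    then show ?thesis using 3 eps by (simp add: n m_def[symmetric] Let_def add_q_def)
  next
    case 4
    have "f x1 \<ge> f m" using 4 Suc.prems by simp
    from Suc.IH[OF L(4) 4(1) this L(2) kn] obtain z qs where
      "BinarySearchIII f f' \<epsilon> n' m x1 = Some (z, qs)" "\<bar>f' z\<bar> < \<epsilon>" "length qs \<le> 2 * k + 2" by blast
    then show ?thesis using 4 eps by (simp add: n m_def[symmetric] Let_def add_q_def)
  qed
qed

lemma II:
  "x0 < x1 \<Longrightarrow> f' x0 \<le> - \<epsilon> \<Longrightarrow> f x0 - f x1 \<le> \<epsilon> / 8 * (x1 - x0) \<Longrightarrow> x1 - x0 < 3/2 * \<epsilon> * 2^k \<Longrightarrow> k < n \<Longrightarrow>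
   \<exists>z qs. BinarySearchII f f' \<epsilon> n x0 x1 = Some (z, qs) \<and> \<bar>f' z\<bar> < \<epsilon> \<and> length qs \<le> 3 * k + 3"
proof (induction k arbitrary: x0 x1 n)
  case 0
  define L where "L = x1 - x0"
  have "f x1 \<le> f x0 + f' x0 * L + L^2 / 2" using descent[of x0 x1] 0 by (simp add: L_def)
  moreover have "f' x0 * L \<le> - \<epsilon> * L" using 0 by (intro mult_right_mono) (auto simp: L_def)
  moreover have "L * (L/2 - 7/8 * \<epsilon>) < 0" using 0 by (intro mult_pos_neg) (auto simp: L_def)
  ultimately have "f x0 - f x1 > \<epsilon> / 8 * L" by (simp add: power2_eq_square algebra_simps)
  then show ?case using 0 by (simp add: L_def)
next
  case (Suc k)
  then obtain n' where n: "n = Suc n'" and kn: "k < n'" by (cases n) auto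
  define m where "m = (x0 + x1) / 2"
  have L: "m - x0 < 3/2 * \<epsilon> * 2^k" "x1 - m < 3/2 * \<epsilon> * 2^k" "x0 < m" "m < x1"
    using Suc.prems by (auto simp: m_def field_simps)
  have L2: "m - x0 < 2 * \<epsilon> * 2^k" "x1 - m < 2 * \<epsilon> * 2^k" using L eps by auto
  consider "\<bar>f' m\<bar> < \<epsilon>" | "f' m \<ge> \<epsilon>" | "f' m \<le> - \<epsilon>" "f m \<ge> f x0"
    | "f' m \<le> - \<epsilon>" "f m < f x0" "f m \<le> f x1"
    | "f' m \<le> - \<epsilon>" "f m < f x0" "f m > f x1" "f x0 - f m \<le> (f x0 - f x1) / 2"
    | "f' m \<le> - \<epsilon>" "f m < f x0" "f m > f x1" "\<not> f x0 - f m \<le> (f x0 - f x1) / 2" by linarith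
  then show ?case
  proof cases
    case 1 then show ?thesis by (simp add: n m_def[symmetric] Let_def)
  next
    case 2
    from BS[OF L(3) Suc.prems(2) 2 L2(1) kn] obtain z qs where
      "BinarySearch f' \<epsilon> n' x0 m = Some (z, qs)" "\<bar>f' z\<bar> < \<epsilon>" "length qs \<le> k + 1" by blast
    then show ?thesis using 2 eps by (simp add: n m_def[symmetric] Let_def add_q_def)
  next
    case 3
    from III[OF L(3) Suc.prems(2) 3(2) L2(1) kn] obtain z qs where
      "BinarySearchIII f f' \<epsilon> n' x0 m = Some (z, qs)" "\<bar>f' z\<bar> < \<epsilon>" "length qs \<le> 2 * k + 2" by blast
    then show ?thesis using 3 eps by (simp add: n m_def[symmetric] Let_def add_q_def)
  next
    case 4
    from III[OF L(4) 4(1) 4(3) L2(2) kn] obtain z qs where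
      "BinarySearchIII f f' \<epsilon> n' m x1 = Some (z, qs)" "\<bar>f' z\<bar> < \<epsilon>" "length qs \<le> 2 * k + 2" by blast
    then show ?thesis using 4 eps by (simp add: n m_def[symmetric] Let_def add_q_def)
  next
    case 5
    have "f x0 - f m \<le> \<epsilon> / 8 * (m - x0)" using 5 Suc.prems by (simp add: m_def field_simps)
    from Suc.IH[OF L(3) Suc.prems(2) this L(1) kn] obtain z qs where
      "BinarySearchII f f' \<epsilon> n' x0 m = Some (z, qs)" "\<bar>f' z\<bar> < \<epsilon>" "length qs \<le> 3 * k + 3" by blast
    then show ?thesis using 5 eps by (simp add: n m_def[symmetric] Let_def add_q_def)
  next
    case 6
    have "f m - f x1 \<le> \<epsilon> / 8 * (x1 - m)" using 6 Suc.prems by (simp add: m_def field_simps)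
    from Suc.IH[OF L(4) 6(1) this L(2) kn] obtain z qs where
      "BinarySearchII f f' \<epsilon> n' m x1 = Some (z, qs)" "\<bar>f' z\<bar> < \<epsilon>" "length qs \<le> 3 * k + 3" by blast
    then show ?thesis using 6 eps by (simp add: n m_def[symmetric] Let_def add_q_def)
  qed
qed

definition good :: "real \<Rightarrow> dg_result \<Rightarrow> bool" where
  "good x0 r = (case r of Stationary z \<Rightarrow> \<bar>f' z\<bar> < \<epsilon>
     | Base xm \<Rightarrow> f' xm \<le> - \<epsilon> \<and> f xm \<le> f x0 \<and> f (xm + 2/\<epsilon>) \<ge> 3/4 * f xm)"

lemma DG:
  assumes kk: "(4/3::real)^k > 2 / \<epsilon>^2"
  shows "f' x0 \<le> - \<epsilon> \<Longrightarrow> f x0 < \<epsilon>^2/2 * (4/3)^j \<Longrightarrow> j + k < n \<Longrightarrow>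
   \<exists>r qs. DecreaseGap f f' \<epsilon> n x0 = Some (r, qs) \<and> good x0 r \<and> length qs \<le> 2 * j + k + 2"
proof (induction j arbitrary: x0 n)
  case 0
  then show ?case using f_lb[of x0] by simp
next
  case (Suc j)
  then obtain n' where n: "n = Suc n'" and kn: "j + k < n'" by (cases n) auto
  define y where "y = x0 + 2 / \<epsilon>"
  have "(4/3::real)^k \<le> 2^k" by (intro power_mono) auto
  then have "2 / \<epsilon>^2 < 2^k" using kk by linarith
  then have "2 / \<epsilon> < 2 * \<epsilon> * 2^k" using eps by (simp add: field_simps power2_eq_square)
  then have Ly: "y - x0 < 2 * \<epsilon> * 2^k" "x0 < y" using eps by (auto simp: y_def)
  consider "\<bar>f' y\<bar> < \<epsilon>" | "f' y \<ge> \<epsilon>" | "f' y \<le> - \<epsilon>" "f y \<ge> 3/4 * f x0" | "f' y \<le> - \<epsilon>" "f y < 3/4 * f x0" by linarith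
  then show ?case
  proof cases
    case 1 then show ?thesis by (simp add: n y_def[symmetric] Let_def good_def)
  next
    case 2
    have "k < n'" using kn by simp
    from BS[OF Ly(2) Suc.prems(1) 2 Ly(1) this] obtain z qs where
      "BinarySearch f' \<epsilon> n' x0 y = Some (z, qs)" "\<bar>f' z\<bar> < \<epsilon>" "length qs \<le> k + 1" by blast
    then show ?thesis using 2 eps by (simp add: n y_def[symmetric] Let_def good_def)
  next
    case 3 then show ?thesis using Suc.prems eps by (simp add: n y_def[symmetric] Let_def good_def)
  next
    case 4
    have "f y < \<epsilon>^2/2 * (4/3)^j" using 4 Suc.prems(2) by simp
    from Suc.IH[OF 4(1) this kn] obtain r qs where
      "DecreaseGap f f' \<epsilon> n' y = Some (r, qs)" "good y r" "length qs \<le> 2 * j + k + 2" by blast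
    moreover have "f y \<le> f x0" using 4 nonneg[of x0] by linarith
    ultimately show ?thesis using 4 eps
      by (cases r) (auto simp add: n y_def[symmetric] Let_def good_def)
  qed
qed

lemma main:
  assumes f0: "f 0 = 1" and f'0: "f' 0 \<le> - \<epsilon>"
  shows "\<exists>n z qs. ZerothOrder f f' \<epsilon> n = Some (z, qs) \<and> \<bar>f' z\<bar> < \<epsilon> \<and>
                   real (card (set qs)) \<le> 55 * (1 + ln (1 / \<epsilon>))"
proof -
  define Lg where "Lg = ln (1 / \<epsilon>)"
  have Lg0: "Lg \<ge> 0" using eps by (simp add: Lg_def)
  define m where "m = nat \<lceil>2 * Lg + 1\<rceil>"
  have m1: "real m \<ge> 2 * Lg + 1" "real m \<le> 2 * Lg + 2" using Lg0 by (auto simp: m_def) linarith+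
  have mpos: "m > 0" using m1 Lg0 by auto
  define k where "k = 4 * m"
  have lt: "(3::real)^m < (256/81)^m" using mpos by (intro power_strict_mono) auto
  have h4: "(4/3::real)^4 = 256/81" by (simp add: eval_nat_numeral)
  have e1: "(4/3::real)^k = (256/81)^m" unfolding k_def power_mult h4 ..
  have a: "(3::real)^m < (4/3)^k" unfolding e1 by (rule lt)
  have "exp (real m) = exp 1 ^ m" by (simp add: exp_of_nat_mult[symmetric])
  also have "\<dots> \<le> 3^m" using exp_le by (intro power_mono) auto
  finally have b: "exp (real m) \<le> 3^m" .
  have eL: "exp Lg = 1/\<epsilon>" using eps by (simp add: Lg_def)
  have "exp (2 * Lg + 1) = exp Lg * exp Lg * exp 1" by (simp only: mult_2 exp_add)
  also have "\<dots> = exp 1 * (1/\<epsilon>)^2" by (simp add: eL power2_eq_square)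
  finally have c: "exp (2 * Lg + 1) = exp 1 * (1/\<epsilon>)^2" .
  have "exp 1 \<ge> (2::real)" using exp_ge_add_one_self[of 1] by simp
  then have "2 * (1/\<epsilon>)^2 \<le> exp 1 * (1/\<epsilon>)^2" by (intro mult_right_mono) auto
  moreover have "2 / \<epsilon>^2 = 2 * (1/\<epsilon>)^2" by (simp add: power_divide)
  moreover have "exp (2 * Lg + 1) \<le> exp (real m)" using m1 by simp
  ultimately have "2 / \<epsilon>^2 \<le> exp (real m)" using c by linarith
  with a b have kk: "(4/3::real)^k > 2 / \<epsilon>^2" by linarith
  have k2: "2 / \<epsilon>^2 < 2^k" using kk power_mono[of "4/3::real" 2 k] by linarith
  have e2: "\<epsilon>^2/2 * (4/3)^k > 1" using kk eps by (simp add: field_simps)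
  define n where "n = 2 * k + 1"
  from DG[OF kk f'0, of k n] f0 e2 obtain r qs where
    r: "DecreaseGap f f' \<epsilon> n 0 = Some (r, qs)" "good 0 r" "length qs \<le> 3 * k + 2"
    by (auto simp: n_def)
  have fin: "real (card (set qs')) \<le> 55 * (1 + Lg)" if "length qs' \<le> 6 * k + 7" for qs'
  proof -
    have "card (set qs') \<le> 6 * k + 7" using card_length[of qs'] that by linarith
    then have "real (card (set qs')) \<le> 24 * real m + 7" by (simp add: k_def)
    also have "\<dots> \<le> 55 * (1 + Lg)"
    proof -
      have "24 * real m \<le> 48 * Lg + 48" using m1 by linarith
      then show ?thesis using Lg0 by (simp add: algebra_simps)
    qed
    finally show ?thesis .
  qed
  have "\<exists>z qs. ZerothOrder f f' \<epsilon> n = Some (z, qs) \<and> \<bar>f' z\<bar> < \<epsilon> \<and> length qs \<le> 6 * k + 7"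
  proof (cases r)
    case (Stationary z)
    then show ?thesis using r by (auto simp: good_def)
  next
    case (Base xm)
    define xp where "xp = xm + 2 / \<epsilon>"
    have g: "f' xm \<le> - \<epsilon>" "f xm \<le> 1" "f xp \<ge> 3/4 * f xm" using r(2) f0 by (auto simp: Base good_def xp_def)
    have Lx: "xm < xp" using eps by (simp add: xp_def)
    have kn: "k < n" by (simp add: n_def)
    have "2 / \<epsilon> < 3/2 * \<epsilon> * 2^k" using k2 eps by (simp add: field_simps power2_eq_square)
    moreover have "2 / \<epsilon> < 2 * \<epsilon> * 2^k" using k2 eps by (simp add: field_simps power2_eq_square)
    ultimately have L1: "xp - xm < 3/2 * \<epsilon> * 2^k" "xp - xm < 2 * \<epsilon> * 2^k" by (auto simp: xp_def)
    show ?thesis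
    proof (cases "f xp \<le> f xm")
      case True
      have "f xm - f xp \<le> \<epsilon> / 8 * (xp - xm)" using g eps by (simp add: xp_def)
      from II[OF Lx g(1) this L1(1) kn] obtain z qs2 where
        "BinarySearchII f f' \<epsilon> n xm xp = Some (z, qs2)" "\<bar>f' z\<bar> < \<epsilon>" "length qs2 \<le> 3 * k + 3" by blast
      then show ?thesis using r True g(1) eps
        by (simp add: Base xp_def[symmetric] Let_def add_q_def)
    next
      case False
      from III[OF Lx g(1) _ L1(2) kn] False obtain z qs2 where
        "BinarySearchIII f f' \<epsilon> n xm xp = Some (z, qs2)" "\<bar>f' z\<bar> < \<epsilon>" "length qs2 \<le> 2 * k + 2" by fastforce
      then show ?thesis using r False g(1) eps
        by (simp add: Base xp_def[symmetric] Let_def add_q_def)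
    qed
  qed
  then show ?thesis using fin unfolding Lg_def by blast
qed

end

theorem theorem2p5:
  "\<exists>C > 0. \<forall>(\<epsilon>::real) (f::real \<Rightarrow> real) (f'::real \<Rightarrow> real).
      0 < \<epsilon> \<and> \<epsilon> < 1 \<and>
      (\<forall>x. (f has_real_derivative f' x) (at x)) \<and>
      (\<forall>x y. \<bar>f' x - f' y\<bar> \<le> \<bar>x - y\<bar>) \<and>
      (\<forall>x. f x \<ge> 0) \<and> f 0 = 1 \<and> f' 0 \<le> - \<epsilon>
    \<longrightarrow> (\<exists>n z qs. ZerothOrder f f' \<epsilon> n = Some (z, qs) \<and> \<bar>f' z\<bar> < \<epsilon> \<and>
                   real (card (set qs)) \<le> C * (1 + ln (1 / \<epsilon>)))"
proof (intro exI[of _ "55::real"] conjI allI impI)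
  fix \<epsilon> :: real and f f' :: "real \<Rightarrow> real"
  assume h: "0 < \<epsilon> \<and> \<epsilon> < 1 \<and>
      (\<forall>x. (f has_real_derivative f' x) (at x)) \<and>
      (\<forall>x y. \<bar>f' x - f' y\<bar> \<le> \<bar>x - y\<bar>) \<and>
      (\<forall>x. f x \<ge> 0) \<and> f 0 = 1 \<and> f' 0 \<le> - \<epsilon>"
  interpret zo f f' \<epsilon> using h by unfold_locales auto
  show "\<exists>n z qs. ZerothOrder f f' \<epsilon> n = Some (z, qs) \<and> \<bar>f' z\<bar> < \<epsilon> \<and>
                   real (card (set qs)) \<le> 55 * (1 + ln (1 / \<epsilon>))"
    using main h by blast
qed simp

end
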